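(* Under the hypotheses and notation of the mass scaling of Olovsson et al. (element matrices $\overline{M}_e=I_3\otimes\bigl(\frac{m_e}{8}I_8+\frac{\beta m_e}{56}(8I_8-\mathbf{e}\mathbf{e}^T)\bigr)$, $\beta\ge0$, $m_e>0$, assembled as $\overline{M}=\sum_eL_e^T\overline{M}_eL_e$), one has $$\kappa(\overline{M})\le p_{\max}\Bigl(1+\tfrac{8}{7}\beta\Bigr)\frac{\max_e m_e}{\min_e m_e},$$ where $p_{\max}$ is the maximum, over global degrees of freedom $i$, of the number of elements $e$ whose index set $\{i_1,\dots,i_m\}$ contains $i$.
   Context: Finite element setting: $n$ global degrees of freedom, $N$ elements, $m=24$ local degrees of freedom per element; for each element $e$, $L_e\in\mathbb{R}^{m\times n}$ satisfies $L_e^T=[\mathbf{e}_{i_1},\dots,\mathbf{e}_{i_m}]$ for distinct indices (columns of $I_n$), and every global index appears for at least one element. $\mathbf{e}\in\mathbb{R}^8$ is the all-ones vector, $\otimes$ the Kronecker product, and $\kappa(A)=\lambda_{\max}(A)/\lambda_{\min}(A)$ for symmetric positive definite $A$. *)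

theory Defs
  imports "HOL-Analysis.Analysis"
begin

(* Square matrices with natural-number indices (0-based). *)
definition ident :: "nat \<Rightarrow> nat \<Rightarrow> real" where
  "ident i j = (if i = j then 1 else 0)"

definition ones :: "nat \<Rightarrow> nat \<Rightarrow> real" where
  "ones i j = 1"

definition kron :: "nat \<Rightarrow> (nat \<Rightarrow> nat \<Rightarrow> real) \<Rightarrow> (nat \<Rightarrow> nat \<Rightarrow> real) \<Rightarrow> nat \<Rightarrow> nat \<Rightarrow> real" where
  "kron p A B i j = A (i div p) (j div p) * B (i mod p) (j mod p)"

definition Mbar_elem :: "real \<Rightarrow> real \<Rightarrow> nat \<Rightarrow> nat \<Rightarrow> real" where
  "Mbar_elem \<beta> m = kron 8 ident
     (\<lambda>i j. m / 8 * ident i j + \<beta> * m / 56 * (8 * ident i j - ones i j))"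

(* Boolean (gather) matrix L_e: rows = local dofs k < 24, columns = global dofs *)
definition Lmat :: "('e \<Rightarrow> nat \<Rightarrow> 'n) \<Rightarrow> 'e \<Rightarrow> nat \<Rightarrow> 'n \<Rightarrow> real" where
  "Lmat idx e k i = (if idx e k = i then 1 else 0)"

definition assemble :: "('e::finite \<Rightarrow> nat \<Rightarrow> 'n::finite) \<Rightarrow> real \<Rightarrow> ('e \<Rightarrow> real) \<Rightarrow> real^'n^'n" where
  "assemble idx \<beta> m = (\<chi> i j. \<Sum>e\<in>UNIV. \<Sum>k<24. \<Sum>l<24.
      Lmat idx e k i * Mbar_elem \<beta> (m e) k l * Lmat idx e l j)"

definition eigenvalues :: "real^'n^'n \<Rightarrow> real set" where
  "eigenvalues A = {c. \<exists>v. v \<noteq> 0 \<and> A *v v = c *\<^sub>R v}"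

definition cond_num :: "real^'n^'n \<Rightarrow> real" where
  "cond_num A = Max (eigenvalues A) / Min (eigenvalues A)"

definition pmax :: "('e::finite \<Rightarrow> nat \<Rightarrow> 'n::finite) \<Rightarrow> nat" where
  "pmax idx = Max (range (\<lambda>i. card {e. i \<in> idx e ` {..<24}}))"

end

theory Submission
  imports Defs
begin


lemma sym_inner:
  fixes A :: "real^'n^'n"
  assumes "transpose A = A"
  shows "x \<bullet> (A *v y) = (A *v x) \<bullet> y"
  by (metis assms dot_lmul_matrix transpose_matrix_vector)

lemma var_eigen:
  fixes A :: "real^'n^'n"
  assumes sym: "transpose A = A"
    and le: "\<And>x. x \<bullet> (A *v x) \<le> lam * (x \<bullet> x)"
    and eq: "v \<bullet> (A *v v) = lam * (v \<bullet> v)"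
  shows "A *v v = lam *\<^sub>R v"
proof -
  define w where "w = lam *\<^sub>R v - A *v v"
  define g where "g x = lam * (x \<bullet> x) - x \<bullet> (A *v x)" for x
  have gpos: "g x \<ge> 0" for x using le[of x] by (simp add: g_def)
  define a where "a = w \<bullet> w"
  define c where "c = g w"
  have key: "g (v + t *\<^sub>R w) = 2 * t * a + t^2 * c" for t
  proof -
    have s: "v \<bullet> (A *v w) = w \<bullet> (A *v v)"
      using sym_inner[OF sym, of v w] by (simp add: inner_commute)
    have ww: "lam * (v \<bullet> w) - w \<bullet> (A *v v) = a"
    proof -
      have "w \<bullet> w = w \<bullet> (lam *\<^sub>R v) - w \<bullet> (A *v v)" by (metis w_def inner_diff_right)
      then show ?thesis unfolding a_def by (simp add: inner_commute)
    qed
    have "g (v + t *\<^sub>R w) = g v + t * (lam * (v \<bullet> w) - v \<bullet> (A *v w))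
        + t * (lam * (v \<bullet> w) - w \<bullet> (A *v v)) + t^2 * g w"
      by (simp add: g_def matrix_vector_right_distrib matrix_vector_mult_scaleR
          inner_add_left inner_add_right inner_commute algebra_simps power2_eq_square)
    also have "\<dots> = 2 * t * a + t^2 * c"
      using eq s ww by (simp add: g_def c_def algebra_simps)
    finally show ?thesis .
  qed
  have c0: "c \<ge> 0" using gpos by (simp add: c_def)
  have "a = 0"
  proof (rule ccontr)
    assume "a \<noteq> 0"
    then have a0: "a > 0" by (simp add: a_def)
    define t where "t = - a / (c + 1)"
    have c1: "c + 1 > 0" using c0 by linarith
    have tc: "t * (c + 1) = - a" unfolding t_def using c1 by simp
    have "(2 * t * a + t^2 * c) * (c+1)^2 = 2 * (t*(c+1)) * a * (c+1) + (t*(c+1))^2 * c"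
      by (simp add: algebra_simps power2_eq_square)
    also have "\<dots> = - (a^2 * (c+2))" unfolding tc by (simp add: algebra_simps power2_eq_square)
    also have "\<dots> < 0" using a0 c0 by (simp add: mult_pos_pos)
    finally have "(2 * t * a + t^2 * c) * (c+1)^2 < 0" .
    then have neg: "2 * t * a + t^2 * c < 0" using c1
      by (metis mult_pos_pos not_less zero_less_power mult_nonneg_nonneg less_eq_real_def)
    show False using neg gpos[of "v + t *\<^sub>R w"] key[of t] by simp
  qed
  then have "w = 0" by (simp add: a_def)
  then show ?thesis by (simp add: w_def)
qed

lemma eig_exists:
  fixes A :: "real^'n^'n"
  assumes sym: "transpose A = A"
  shows "eigenvalues A \<noteq> {}"
proof -
  let ?f = "\<lambda>x::real^'n. x \<bullet> (A *v x)"
  have ne: "sphere (0::real^'n) 1 \<noteq> {}"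
  proof -
    obtain i :: 'n where True by simp
    have "axis i 1 \<in> sphere (0::real^'n) 1" by simp
    then show ?thesis by blast
  qed
  have cont: "continuous_on (sphere 0 1) ?f"
    by (intro continuous_intros matrix_vector_mult_linear_continuous_on)
  obtain v where v: "v \<in> sphere 0 1" and vmax: "\<And>y. y \<in> sphere 0 1 \<Longrightarrow> ?f y \<le> ?f v"
    using continuous_attains_sup[OF compact_sphere ne cont] by blast
  have nv: "norm v = 1" using v by simp
  have vv: "v \<bullet> v = 1" using nv by (metis power2_norm_eq_inner power_one)
  define lam where "lam = ?f v"
  have le: "?f x \<le> lam * (x \<bullet> x)" for x
  proof (cases "x = 0")
    case True then show ?thesis by simp
  next
    case False
    define u where "u = (1 / norm x) *\<^sub>R x"
    have u: "u \<in> sphere 0 1" using False by (simp add: u_def)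
    have xu: "x = norm x *\<^sub>R u" using False by (simp add: u_def)
    have "?f x = (norm x)^2 * ?f u"
      by (subst xu, subst xu) (simp add: matrix_vector_mult_scaleR power2_eq_square)
    also have "\<dots> \<le> (norm x)^2 * lam" using vmax[OF u] by (simp add: lam_def mult_left_mono)
    finally show ?thesis by (simp add: power2_norm_eq_inner mult.commute)
  qed
  have "A *v v = lam *\<^sub>R v"
    by (rule var_eigen[OF sym le]) (simp add: vv lam_def)
  moreover have "v \<noteq> 0" using nv by auto
  ultimately show ?thesis unfolding eigenvalues_def by blast
qed

lemma eig_finite:
  fixes A :: "real^'n^'n"
  assumes sym: "transpose A = A"
  shows "finite (eigenvalues A)"
proof -
  define f where "f c = (SOME v. v \<noteq> 0 \<and> A *v v = c *\<^sub>R v)" for c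
  have fP: "f c \<noteq> 0 \<and> A *v f c = c *\<^sub>R f c" if "c \<in> eigenvalues A" for c
  proof -
    have ex: "\<exists>v. v \<noteq> 0 \<and> A *v v = c *\<^sub>R v" using that unfolding eigenvalues_def by simp
    show ?thesis unfolding f_def by (rule someI_ex[OF ex])
  qed
  have orth: "f c \<bullet> f d = 0" if "c \<in> eigenvalues A" "d \<in> eigenvalues A" "c \<noteq> d" for c d
  proof -
    have "c * (f c \<bullet> f d) = (A *v f c) \<bullet> f d" using fP[OF that(1)] by simp
    also have "\<dots> = f c \<bullet> (A *v f d)" using sym_inner[OF sym] by simp
    also have "\<dots> = d * (f c \<bullet> f d)" using fP[OF that(2)] by simp
    finally show ?thesis using that(3) by simp
  qed
  have inj: "inj_on f (eigenvalues A)"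
  proof (rule inj_onI)
    fix c d assume c: "c \<in> eigenvalues A" and d: "d \<in> eigenvalues A" and e: "f c = f d"
    show "c = d"
    proof (rule ccontr)
      assume "c \<noteq> d"
      then have "f c \<bullet> f c = 0" using orth[OF c d] e by simp
      then show False using fP[OF c] by simp
    qed
  qed
  have po: "pairwise orthogonal (f ` eigenvalues A)"
    unfolding pairwise_def orthogonal_def using orth by blast
  have "0 \<notin> f ` eigenvalues A" using fP by auto
  then have "independent (f ` eigenvalues A)" using pairwise_orthogonal_independent po by blast
  then have "finite (f ` eigenvalues A)" using independent_bound by blast
  then show ?thesis using finite_imageD inj by blast
qed

lemma cond_bound:
  fixes A :: "real^'n^'n"
  assumes sym: "transpose A = A"
    and lo: "\<And>x. lo * (x \<bullet> x) \<le> x \<bullet> (A *v x)"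
    and hi: "\<And>x. x \<bullet> (A *v x) \<le> hi * (x \<bullet> x)"
    and lo0: "lo > 0"
  shows "cond_num A \<le> hi / lo"
proof -
  have fin: "finite (eigenvalues A)" by (rule eig_finite[OF sym])
  have ne: "eigenvalues A \<noteq> {}" by (rule eig_exists[OF sym])
  have bnd: "lo \<le> c \<and> c \<le> hi" if "c \<in> eigenvalues A" for c
  proof -
    have "\<exists>v. v \<noteq> 0 \<and> A *v v = c *\<^sub>R v" using that unfolding eigenvalues_def by simp
    then obtain v where v: "v \<noteq> 0" "A *v v = c *\<^sub>R v" by blast
    have vv: "v \<bullet> v > 0" using v(1) by (rule inner_gt_zero_iff[THEN iffD2])
    have q: "v \<bullet> (A *v v) = c * (v \<bullet> v)" unfolding v(2) by (rule inner_scaleR_right)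
    have "lo * (v \<bullet> v) \<le> c * (v \<bullet> v)" using lo[of v] unfolding q .
    then have 1: "lo \<le> c" using vv by (rule mult_right_le_imp_le)
    have "c * (v \<bullet> v) \<le> hi * (v \<bullet> v)" using hi[of v] unfolding q .
    then have 2: "c \<le> hi" using vv by (rule mult_right_le_imp_le)
    show ?thesis using 1 2 by (rule conjI)
  qed
  have M: "Max (eigenvalues A) \<in> eigenvalues A" by (rule Max_in[OF fin ne])
  have N: "Min (eigenvalues A) \<in> eigenvalues A" by (rule Min_in[OF fin ne])
  have mx: "Max (eigenvalues A) \<le> hi" using bnd[OF M] by (rule conjunct2)
  have mn: "lo \<le> Min (eigenvalues A)" using bnd[OF N] by (rule conjunct1)
  have h0: "0 \<le> hi" using bnd[OF M] lo0 by linarith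
  show ?thesis unfolding cond_num_def
    using frac_le[OF h0 mx lo0 mn] .
qed



lemma split24: fixes g :: "nat \<Rightarrow> real" shows "(\<Sum>k<24. g k) = (\<Sum>b<3. \<Sum>i<8. g (b*8+i))"
proof -
  have "(\<Sum>k<24. g k) = (\<Sum>b<3. sum g {b*8..<b*8+8})"
    using sum.nat_group[of g 8 3] by simp
  also have "\<dots> = (\<Sum>b<3. \<Sum>i<8. g (b*8+i))"
  proof (rule sum.cong[OF refl])
    fix b :: nat
    have "sum g {0 + b*8..<8 + b*8} = (\<Sum>i=0..<8. g (i + b*8))"
      by (rule sum.shift_bounds_nat_ivl)
    then show "sum g {b*8..<b*8+8} = (\<Sum>i<8. g (b*8+i))"
      by (simp add: atLeast0LessThan add.commute)
  qed
  finally show ?thesis .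
qed

lemma Mbar_block:
  assumes "i < 8" "j < 8"
  shows "Mbar_elem \<beta> m (b*8+i) (c*8+j) =
     ident b c * ((m/8 + \<beta>*m/7) * ident i j - \<beta>*m/56)"
  using assms by (simp add: Mbar_elem_def kron_def ones_def ident_def algebra_simps)

lemma ident_sum:
  assumes "finite A" "i \<in> A"
  shows "(\<Sum>j\<in>A. ident i j * f j) = (f i :: real)"
proof -
  have "(\<Sum>j\<in>A. ident i j * f j) = (\<Sum>j\<in>A. if i = j then f j else 0)"
    by (rule sum.cong) (simp_all add: ident_def)
  also have "\<dots> = f i" using assms by simp
  finally show ?thesis .
qed

lemma block_form:
  fixes z :: "nat \<Rightarrow> real"
  shows "(\<Sum>i<8. \<Sum>j<8. z i * (a * ident i j - d) * z j)
       = a * (\<Sum>i<8. (z i)^2) - d * (\<Sum>i<8. z i)^2"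
proof -
  have "(\<Sum>i<8. \<Sum>j<8. z i * (a * ident i j - d) * z j)
      = (\<Sum>i<8. a * (z i)^2 - d * z i * (\<Sum>j<8. z j))"
  proof (rule sum.cong[OF refl])
    fix i :: nat assume "i \<in> {..<8}"
    have "(\<Sum>j<8. z i * (a * ident i j - d) * z j)
       = (\<Sum>j<8. ident i j * (a * z i * z j)) - (\<Sum>j<8. d * z i * z j)"
      by (simp add: algebra_simps sum_subtractf[symmetric])
    also have "\<dots> = a * (z i)^2 - d * z i * (\<Sum>j<8. z j)"
      using \<open>i \<in> {..<8}\<close> by (simp add: ident_sum sum_distrib_left power2_eq_square)
    finally show "(\<Sum>j<8. z i * (a * ident i j - d) * z j) = a * (z i)^2 - d * z i * (\<Sum>j<8. z j)" .
  qed
  also have "\<dots> = a * (\<Sum>i<8. (z i)^2) - d * (\<Sum>i<8. z i)^2"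
    by (simp add: sum_subtractf sum_distrib_left sum_distrib_right power2_eq_square)
      (subst sum.swap, simp add: mult_ac)
  finally show ?thesis .
qed

lemma Q_block:
  fixes y :: "nat \<Rightarrow> real"
  shows "(\<Sum>k<24. \<Sum>l<24. y k * Mbar_elem \<beta> m k l * y l)
     = (\<Sum>b<3. (m/8 + \<beta>*m/7) * (\<Sum>i<8. (y (b*8+i))^2) - \<beta>*m/56 * (\<Sum>i<8. y (b*8+i))^2)"
proof -
  define a where "a = m/8 + \<beta>*m/7"
  define d where "d = \<beta>*m/56"
  have "(\<Sum>k<24. \<Sum>l<24. y k * Mbar_elem \<beta> m k l * y l)
      = (\<Sum>b<3. \<Sum>i<8. \<Sum>c<3. \<Sum>j<8. y (b*8+i) * Mbar_elem \<beta> m (b*8+i) (c*8+j) * y (c*8+j))"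
    by (simp only: split24)
  also have "\<dots> = (\<Sum>b<3. \<Sum>i<8. \<Sum>c<3. ident b c * (\<Sum>j<8. y (b*8+i) * (a * ident i j - d) * y (c*8+j)))"
  proof (intro sum.cong refl)
    fix b i c :: nat assume i: "i \<in> {..<8}"
    show "(\<Sum>j<8. y (b*8+i) * Mbar_elem \<beta> m (b*8+i) (c*8+j) * y (c*8+j))
       = ident b c * (\<Sum>j<8. y (b*8+i) * (a * ident i j - d) * y (c*8+j))"
      unfolding sum_distrib_left
    proof (intro sum.cong refl)
      fix j :: nat assume j: "j \<in> {..<8}"
      have "Mbar_elem \<beta> m (b*8+i) (c*8+j) = ident b c * (a * ident i j - d)"
        using i j by (simp add: Mbar_block a_def d_def)
      then show "y (b*8+i) * Mbar_elem \<beta> m (b*8+i) (c*8+j) * y (c*8+j)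
         = ident b c * (y (b*8+i) * (a * ident i j - d) * y (c*8+j))" by simp
    qed
  qed
  also have "\<dots> = (\<Sum>b<3. \<Sum>i<8. \<Sum>j<8. y (b*8+i) * (a * ident i j - d) * y (b*8+j))"
    by (rule sum.cong[OF refl], rule sum.cong[OF refl]) (simp add: ident_sum)
  also have "\<dots> = (\<Sum>b<3. a * (\<Sum>i<8. (y (b*8+i))^2) - d * (\<Sum>i<8. y (b*8+i))^2)"
    by (intro sum.cong refl) (rule block_form)
  finally show ?thesis by (simp add: a_def d_def)
qed

lemma elem_bounds:
  fixes y :: "nat \<Rightarrow> real"
  assumes b: "\<beta> \<ge> 0" and m: "m > 0"
  shows "m/8 * (\<Sum>k<24. (y k)^2) \<le> (\<Sum>k<24. \<Sum>l<24. y k * Mbar_elem \<beta> m k l * y l)"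
    and "(\<Sum>k<24. \<Sum>l<24. y k * Mbar_elem \<beta> m k l * y l) \<le> m/8*(1+8/7*\<beta>) * (\<Sum>k<24. (y k)^2)"
proof -
  have d0: "\<beta>*m/56 \<ge> 0" using b m by simp
  have lo: "m/8 * (\<Sum>i<8. (y (b*8+i))^2) \<le> (m/8 + \<beta>*m/7) * (\<Sum>i<8. (y (b*8+i))^2) - \<beta>*m/56 * (\<Sum>i<8. y (b*8+i))^2" for b
  proof -
    have cs: "(\<Sum>i<8. y (b*8+i))^2 \<le> 8 * (\<Sum>i<8. (y (b*8+i))^2)"
      using sum_squared_le_sum_of_squares[of "\<lambda>i. y (b*8+i)" "{..<8}"] by simp
    have "\<beta>*m/56 * (\<Sum>i<8. y (b*8+i))^2 \<le> \<beta>*m/56 * (8 * (\<Sum>i<8. (y (b*8+i))^2))"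
      by (rule mult_left_mono[OF cs d0])
    then show ?thesis by (simp add: algebra_simps)
  qed
  have hi: "(m/8 + \<beta>*m/7) * (\<Sum>i<8. (y (b*8+i))^2) - \<beta>*m/56 * (\<Sum>i<8. y (b*8+i))^2 \<le> m/8*(1+8/7*\<beta>) * (\<Sum>i<8. (y (b*8+i))^2)" for b
  proof -
    have "0 \<le> \<beta>*m/56 * (\<Sum>i<8. y (b*8+i))^2" using d0 by simp
    then show ?thesis by (simp add: algebra_simps)
  qed
  have tot: "(\<Sum>k<24. (y k)^2) = (\<Sum>b<3. \<Sum>i<8. (y (b*8+i))^2)" by (rule split24)
  show "m/8 * (\<Sum>k<24. (y k)^2) \<le> (\<Sum>k<24. \<Sum>l<24. y k * Mbar_elem \<beta> m k l * y l)"
    unfolding Q_block tot sum_distrib_left[of "m/8" "\<lambda>b. \<Sum>i<8. (y (b*8+i))^2"] by (rule sum_mono) (rule lo)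
  show "(\<Sum>k<24. \<Sum>l<24. y k * Mbar_elem \<beta> m k l * y l) \<le> m/8*(1+8/7*\<beta>) * (\<Sum>k<24. (y k)^2)"
    unfolding Q_block tot sum_distrib_left[of "m/8*(1+8/7*\<beta>)" "\<lambda>b. \<Sum>i<8. (y (b*8+i))^2"] by (rule sum_mono) (rule hi)
qed

lemma Lsum:
  fixes x :: "'n::finite \<Rightarrow> real"
  shows "(\<Sum>j\<in>UNIV. Lmat idx e l j * x j) = x (idx e l)"
proof -
  have "(\<Sum>j\<in>UNIV. Lmat idx e l j * x j) = (\<Sum>j\<in>UNIV. if idx e l = j then x j else 0)"
    by (rule sum.cong) (simp_all add: Lmat_def)
  also have "\<dots> = x (idx e l)" by simp
  finally show ?thesis .
qed

lemma collapse_r: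
  fixes f :: "'e::finite \<Rightarrow> nat \<Rightarrow> nat \<Rightarrow> real" and x :: "'n::finite \<Rightarrow> real"
    and idx :: "'e \<Rightarrow> nat \<Rightarrow> 'n"
  shows "(\<Sum>j\<in>UNIV. (\<Sum>e\<in>UNIV. \<Sum>k<24. \<Sum>l<24. f e k l * Lmat idx e l j) * x j)
       = (\<Sum>e\<in>UNIV. \<Sum>k<24. \<Sum>l<24. f e k l * x (idx e l))"
proof -
  have "(\<Sum>j\<in>UNIV. (\<Sum>e\<in>UNIV. \<Sum>k<24. \<Sum>l<24. f e k l * Lmat idx e l j) * x j)
      = (\<Sum>j\<in>UNIV. \<Sum>e\<in>UNIV. \<Sum>k<24. \<Sum>l<24. f e k l * (Lmat idx e l j * x j))"
    by (simp add: sum_distrib_right mult.assoc)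
  also have "\<dots> = (\<Sum>e\<in>UNIV. \<Sum>j\<in>UNIV. \<Sum>k<24. \<Sum>l<24. f e k l * (Lmat idx e l j * x j))"
    by (rule sum.swap)
  also have "\<dots> = (\<Sum>e\<in>UNIV. \<Sum>k<24. \<Sum>j\<in>UNIV. \<Sum>l<24. f e k l * (Lmat idx e l j * x j))"
    by (rule sum.cong[OF refl], rule sum.swap)
  also have "\<dots> = (\<Sum>e\<in>UNIV. \<Sum>k<24. \<Sum>l<24. \<Sum>j\<in>UNIV. f e k l * (Lmat idx e l j * x j))"
    by (rule sum.cong[OF refl], rule sum.cong[OF refl], rule sum.swap)
  also have "\<dots> = (\<Sum>e\<in>UNIV. \<Sum>k<24. \<Sum>l<24. f e k l * (\<Sum>j\<in>UNIV. Lmat idx e l j * x j))"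
    by (simp add: sum_distrib_left)
  also have "\<dots> = (\<Sum>e\<in>UNIV. \<Sum>k<24. \<Sum>l<24. f e k l * x (idx e l))"
    by (simp add: Lsum)
  finally show ?thesis .
qed

lemma collapse_l:
  fixes f :: "'e::finite \<Rightarrow> nat \<Rightarrow> nat \<Rightarrow> real" and x :: "'n::finite \<Rightarrow> real"
    and idx :: "'e \<Rightarrow> nat \<Rightarrow> 'n"
  shows "(\<Sum>i\<in>UNIV. x i * (\<Sum>e\<in>UNIV. \<Sum>k<24. \<Sum>l<24. Lmat idx e k i * f e k l))
       = (\<Sum>e\<in>UNIV. \<Sum>k<24. \<Sum>l<24. x (idx e k) * f e k l)"
proof -
  have "(\<Sum>i\<in>UNIV. x i * (\<Sum>e\<in>UNIV. \<Sum>k<24. \<Sum>l<24. Lmat idx e k i * f e k l))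
      = (\<Sum>i\<in>UNIV. (\<Sum>e\<in>UNIV. \<Sum>l<24. \<Sum>k<24. f e k l * Lmat idx e k i) * x i)"
  proof (rule sum.cong[OF refl])
    fix i
    have "(\<Sum>e\<in>UNIV. \<Sum>k<24. \<Sum>l<24. Lmat idx e k i * f e k l) = (\<Sum>e\<in>UNIV. \<Sum>l<24. \<Sum>k<24. f e k l * Lmat idx e k i)"
      by (rule sum.cong[OF refl], subst sum.swap, simp add: mult.commute)
    then show "x i * (\<Sum>e\<in>UNIV. \<Sum>k<24. \<Sum>l<24. Lmat idx e k i * f e k l) = (\<Sum>e\<in>UNIV. \<Sum>l<24. \<Sum>k<24. f e k l * Lmat idx e k i) * x i"
      by (simp only: mult.commute)
  qed
  also have "\<dots> = (\<Sum>e\<in>UNIV. \<Sum>l<24. \<Sum>k<24. f e k l * x (idx e k))"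
    by (rule collapse_r)
  also have "\<dots> = (\<Sum>e\<in>UNIV. \<Sum>k<24. \<Sum>l<24. x (idx e k) * f e k l)"
    by (rule sum.cong[OF refl], subst sum.swap, simp add: mult_ac)
  finally show ?thesis .
qed

lemma quad_assemble:
  fixes idx :: "'e::finite \<Rightarrow> nat \<Rightarrow> 'n::finite"
  shows "x \<bullet> (assemble idx \<beta> m *v x)
     = (\<Sum>e\<in>UNIV. \<Sum>k<24. \<Sum>l<24. x $ idx e k * Mbar_elem \<beta> (m e) k l * x $ idx e l)"
proof -
  have row: "(assemble idx \<beta> m *v x) $ i
     = (\<Sum>e\<in>UNIV. \<Sum>k<24. \<Sum>l<24. Lmat idx e k i * Mbar_elem \<beta> (m e) k l * x $ idx e l)" for i
  proof -
    have "(assemble idx \<beta> m *v x) $ i = (\<Sum>j\<in>UNIV. (\<Sum>e\<in>UNIV. \<Sum>k<24. \<Sum>l<24.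
        (Lmat idx e k i * Mbar_elem \<beta> (m e) k l) * Lmat idx e l j) * x $ j)"
      by (simp add: matrix_vector_mult_def assemble_def)
    also have "\<dots> = (\<Sum>e\<in>UNIV. \<Sum>k<24. \<Sum>l<24. (Lmat idx e k i * Mbar_elem \<beta> (m e) k l) * x $ idx e l)"
      by (rule collapse_r)
    finally show ?thesis .
  qed
  have "x \<bullet> (assemble idx \<beta> m *v x) = (\<Sum>i\<in>UNIV. x $ i * (assemble idx \<beta> m *v x) $ i)"
    by (simp add: inner_vec_def)
  also have "\<dots> = (\<Sum>i\<in>UNIV. x $ i * (\<Sum>e\<in>UNIV. \<Sum>k<24. \<Sum>l<24. Lmat idx e k i * (Mbar_elem \<beta> (m e) k l * x $ idx e l)))"
    by (simp add: row mult.assoc)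
  also have "\<dots> = (\<Sum>e\<in>UNIV. \<Sum>k<24. \<Sum>l<24. x $ idx e k * (Mbar_elem \<beta> (m e) k l * x $ idx e l))"
    by (rule collapse_l)
  finally show ?thesis by (simp add: mult.assoc)
qed

lemma Mbar_sym: "Mbar_elem \<beta> m k l = Mbar_elem \<beta> m l k"
  by (simp add: Mbar_elem_def kron_def ident_def ones_def eq_commute)

lemma assemble_sym:
  fixes idx :: "'e::finite \<Rightarrow> nat \<Rightarrow> 'n::finite"
  shows "transpose (assemble idx \<beta> m) = assemble idx \<beta> m"
proof -
  have "(\<Sum>e\<in>UNIV. \<Sum>k<24. \<Sum>l<24. Lmat idx e k j * Mbar_elem \<beta> (m e) k l * Lmat idx e l i)
      = (\<Sum>e\<in>UNIV. \<Sum>k<24. \<Sum>l<24. Lmat idx e k i * Mbar_elem \<beta> (m e) k l * Lmat idx e l j)" for i j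
    by (rule sum.cong[OF refl], subst sum.swap, simp add: Mbar_sym mult_ac)
  then show ?thesis by (simp add: vec_eq_iff transpose_def assemble_def)
qed

lemma count_sum:
  fixes idx :: "'e::finite \<Rightarrow> nat \<Rightarrow> 'n::finite" and g :: "'n \<Rightarrow> real"
  assumes inj: "\<And>e. inj_on (idx e) {..<24}"
  shows "(\<Sum>e\<in>UNIV. \<Sum>k<24. g (idx e k)) = (\<Sum>i\<in>UNIV. g i * real (card {e. i \<in> idx e ` {..<24}}))"
proof -
  have "(\<Sum>k<24. g (idx e k)) = (\<Sum>i\<in>UNIV. if i \<in> idx e ` {..<24} then g i else 0)" for e
  proof -
    have "(\<Sum>k<24. g (idx e k)) = sum g (idx e ` {..<24})"
      by (simp add: sum.reindex[OF inj])
    also have "\<dots> = sum g (UNIV \<inter> idx e ` {..<24})" by simp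
    also have "\<dots> = (\<Sum>i\<in>UNIV. if i \<in> idx e ` {..<24} then g i else 0)"
      by (rule sum.inter_restrict) simp
    finally show ?thesis .
  qed
  then have "(\<Sum>e\<in>UNIV. \<Sum>k<24. g (idx e k)) = (\<Sum>e\<in>UNIV. \<Sum>i\<in>UNIV. if i \<in> idx e ` {..<24} then g i else 0)"
    by simp
  also have "\<dots> = (\<Sum>i\<in>UNIV. \<Sum>e\<in>UNIV. if i \<in> idx e ` {..<24} then g i else 0)"
    by (rule sum.swap)
  also have "\<dots> = (\<Sum>i\<in>UNIV. g i * real (card {e. i \<in> idx e ` {..<24}}))"
  proof (rule sum.cong[OF refl])
    fix i
    have "(\<Sum>e\<in>UNIV. if i \<in> idx e ` {..<24} then g i else 0) = sum (\<lambda>e. g i) {e\<in>UNIV. i \<in> idx e ` {..<24}}"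
      by (rule sum.inter_filter[symmetric]) simp
    also have "\<dots> = g i * real (card {e. i \<in> idx e ` {..<24}})" by simp
    finally show "(\<Sum>e\<in>UNIV. if i \<in> idx e ` {..<24} then g i else 0) = g i * real (card {e. i \<in> idx e ` {..<24}})" .
  qed
  finally show ?thesis .
qed

theorem mainTheorem9:
  fixes idx :: "'e::finite \<Rightarrow> nat \<Rightarrow> 'n::finite"
    and m :: "'e \<Rightarrow> real" and \<beta> :: real
  assumes distinct: "\<And>e. inj_on (idx e) {..<24}"
    and cover: "\<And>i. \<exists>e. i \<in> idx e ` {..<24}"
    and beta: "\<beta> \<ge> 0"
    and mpos: "\<And>e. m e > 0"
  shows "cond_num (assemble idx \<beta> m)
           \<le> real (pmax idx) * (1 + 8 / 7 * \<beta>) * (Max (range m) / Min (range m))"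
proof -
  define A where "A = assemble idx \<beta> m"
  define mn where "mn = Min (range m)"
  define mx where "mx = Max (range m)"
  define p where "p = real (pmax idx)"
  define cnt where "cnt i = real (card {e. i \<in> idx e ` {..<24}})" for i
  define S where "S x e = (\<Sum>k<24. (x $ idx e k)^2)" for x :: "real^'n" and e
  have finr: "finite (range m)" by simp
  have mn0: "mn > 0" unfolding mn_def using Min_in[OF finr] mpos by auto
  have mnle: "mn \<le> m e" for e unfolding mn_def using finr by simp
  have mxge: "m e \<le> mx" for e unfolding mx_def using finr by simp
  have b1: "1 + 8/7*\<beta> \<ge> 0" using beta by simp
  have cnt1: "1 \<le> cnt i" for i
  proof -
    obtain e where "i \<in> idx e ` {..<24}" using cover by blast
    then have "{e. i \<in> idx e ` {..<24}} \<noteq> {}" by blast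
    then have "card {e. i \<in> idx e ` {..<24}} \<ge> 1" by (simp add: Suc_le_eq card_gt_0_iff)
    then show ?thesis unfolding cnt_def by simp
  qed
  have cntp: "cnt i \<le> p" for i
  proof -
    have "card {e. i \<in> idx e ` {..<24}} \<le> pmax idx"
      unfolding pmax_def by (rule Max_ge) auto
    then show ?thesis unfolding cnt_def p_def by simp
  qed
  have xx: "x \<bullet> x = (\<Sum>i\<in>UNIV. (x $ i)^2)" for x :: "real^'n"
    by (simp add: inner_vec_def power2_eq_square)
  have Ssum: "(\<Sum>e\<in>UNIV. S x e) = (\<Sum>i\<in>UNIV. (x $ i)^2 * cnt i)" for x
    unfolding S_def cnt_def by (rule count_sum[OF distinct])
  have S0: "S x e \<ge> 0" for x e unfolding S_def by (simp add: sum_nonneg)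
  have qf: "x \<bullet> (A *v x) = (\<Sum>e\<in>UNIV. \<Sum>k<24. \<Sum>l<24. x $ idx e k * Mbar_elem \<beta> (m e) k l * x $ idx e l)" for x
    unfolding A_def by (rule quad_assemble)
  have lo: "mn/8 * (x \<bullet> x) \<le> x \<bullet> (A *v x)" for x
  proof -
    have "mn/8 * (x \<bullet> x) \<le> mn/8 * (\<Sum>i\<in>UNIV. (x $ i)^2 * cnt i)"
      unfolding xx using mn0 cnt1
    proof (intro mult_left_mono sum_mono)
      fix i
      have "(x $ i)^2 * 1 \<le> (x $ i)^2 * cnt i" by (rule mult_left_mono[OF cnt1]) simp
      then show "(x $ i)^2 \<le> (x $ i)^2 * cnt i" by simp
    qed (use mn0 in simp)
    also have "\<dots> = (\<Sum>e\<in>UNIV. mn/8 * S x e)" by (simp only: Ssum[symmetric] sum_distrib_left)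
    also have "\<dots> \<le> (\<Sum>e\<in>UNIV. m e/8 * S x e)"
      by (intro sum_mono mult_right_mono) (simp_all add: mnle S0)
    also have "\<dots> \<le> x \<bullet> (A *v x)"
      unfolding qf S_def by (intro sum_mono elem_bounds(1) beta mpos)
    finally show ?thesis .
  qed
  have hi: "x \<bullet> (A *v x) \<le> mx/8*(1+8/7*\<beta>)*p * (x \<bullet> x)" for x
  proof -
    have "x \<bullet> (A *v x) \<le> (\<Sum>e\<in>UNIV. m e/8*(1+8/7*\<beta>) * S x e)"
      unfolding qf S_def by (intro sum_mono elem_bounds(2) beta mpos)
    also have "\<dots> \<le> (\<Sum>e\<in>UNIV. mx/8*(1+8/7*\<beta>) * S x e)"
      by (intro sum_mono mult_right_mono) (use mxge S0 b1 mpos in \<open>auto intro: mult_nonneg_nonneg\<close>)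
    also have "\<dots> = mx/8*(1+8/7*\<beta>) * (\<Sum>i\<in>UNIV. (x $ i)^2 * cnt i)"
      by (simp only: Ssum[symmetric] sum_distrib_left)
    also have "\<dots> \<le> mx/8*(1+8/7*\<beta>) * (\<Sum>i\<in>UNIV. (x $ i)^2 * p)"
    proof (rule mult_left_mono)
      show "(\<Sum>i\<in>UNIV. (x $ i)^2 * cnt i) \<le> (\<Sum>i\<in>UNIV. (x $ i)^2 * p)"
        by (intro sum_mono mult_left_mono cntp) simp
      have "mx \<ge> 0" using mxge[of undefined] mpos[of undefined] by linarith
      then show "0 \<le> mx/8*(1+8/7*\<beta>)" using b1 by simp
    qed
    also have "\<dots> = mx/8*(1+8/7*\<beta>)*p * (x \<bullet> x)"
      unfolding xx sum_distrib_right[symmetric] by (simp only: mult_ac)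
    finally show ?thesis .
  qed
  have "cond_num A \<le> (mx/8*(1+8/7*\<beta>)*p) / (mn/8)"
    by (rule cond_bound[OF _ lo hi]) (simp_all add: A_def assemble_sym mn0)
  also have "\<dots> = p * (1 + 8 / 7 * \<beta>) * (mx / mn)"
    using mn0 by (simp add: field_simps)
  finally show ?thesis by (simp add: A_def p_def mx_def mn_def)
qed

end
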